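(* Let $G$ be a finitely generated group with decidable word problem and $S$ a finite generating set of $G$. Then the infinite snake problem for $(G,S)$ is in $\Pi^0_1$.
   Context: The word problem of $G$ with respect to $S$ asks, given a word $w$ over $S\cup S^{-1}$, whether $w$ represents $1_G$. A tileset graph for $(G,S)$ is a finite multigraph $\Gamma=(A,B)$ whose edges are triples $(a,a',s)$ with $a,a'\in A$, $s\in S\cup S^{-1}$, such that $(a,a',s)\in B$ implies $(a',a,s^{-1})\in B$. A bi-infinite $\Gamma$-snake is a pair $(\omega,\zeta)$ with $\omega:\mathbb{Z}\to G$ injective and $\zeta:\mathbb{Z}\to A$ such that $d\omega_i:=\omega(i)^{-1}\omega(i+1)\in S\cup S^{-1}$ and $(\zeta(i),\zeta(i+1),d\omega_i)\in B$ for all $i$. The infinite snake problem for $(G,S)$: given $\Gamma$, decide whether a bi-infinite $\Gamma$-snake exists. *)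

theory Defs
  imports "HOL-Algebra.Generated_Groups" "HOL-Library.Nat_Bijection"
begin

datatype recf =
    Zf
  | Sf
  | Idf nat
  | Cnf recf "recf list"
  | Prf recf recf
  | Mnf recf

inductive reval :: "recf \<Rightarrow> nat list \<Rightarrow> nat \<Rightarrow> bool" where
  zero: "reval Zf xs 0"
| succ: "reval Sf (x # xs) (Suc x)"
| proj: "i < length xs \<Longrightarrow> reval (Idf i) xs (xs ! i)"
| comp: "list_all2 (\<lambda>g y. reval g xs y) gs ys \<Longrightarrow> reval f ys r \<Longrightarrow> reval (Cnf f gs) xs r"
| prim0: "reval f xs r \<Longrightarrow> reval (Prf f g) (0 # xs) r"
| primS: "reval (Prf f g) (n # xs) y \<Longrightarrow> reval g (n # y # xs) r \<Longrightarrow> reval (Prf f g) (Suc n # xs) r"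
| mini: "reval f (n # xs) 0 \<Longrightarrow> (\<forall>m<n. \<exists>y. reval f (m # xs) y \<and> y > 0)
          \<Longrightarrow> reval (Mnf f) xs n"

definition decidable_set :: "nat set \<Rightarrow> bool" where
  "decidable_set A \<longleftrightarrow> (\<exists>f. \<forall>n. reval f [n] (if n \<in> A then 1 else 0))"

definition decidable_rel :: "(nat \<times> nat) set \<Rightarrow> bool" where
  "decidable_rel R \<longleftrightarrow> (\<exists>f. \<forall>n m. reval f [n, m] (if (n, m) \<in> R then 1 else 0))"

definition Pi01 :: "nat set \<Rightarrow> bool" where
  "Pi01 A \<longleftrightarrow> (\<exists>R. decidable_rel R \<and> (\<forall>n. n \<in> A \<longleftrightarrow> (\<forall>m. (n, m) \<in> R)))"

text \<open>The finite generating set S is enumerated by a list gens.  Letters of S \<union> S\<inverse>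
  are coded by naturals l < 2 * length gens: l = 2i stands for gens!i and l = 2i+1
  for its inverse.\<close>

definition letter_ok :: "'g list \<Rightarrow> nat \<Rightarrow> bool" where
  "letter_ok gens l \<longleftrightarrow> l < 2 * length gens"

definition letter_val :: "('g, 'b) monoid_scheme \<Rightarrow> 'g list \<Rightarrow> nat \<Rightarrow> 'g" where
  "letter_val G gens l =
     (if even l then gens ! (l div 2) else inv\<^bsub>G\<^esub> (gens ! (l div 2)))"

definition word_val :: "('g, 'b) monoid_scheme \<Rightarrow> 'g list \<Rightarrow> nat list \<Rightarrow> 'g" where
  "word_val G gens w = foldr (\<lambda>l g. letter_val G gens l \<otimes>\<^bsub>G\<^esub> g) w \<one>\<^bsub>G\<^esub>"

definition word_problem :: "('g, 'b) monoid_scheme \<Rightarrow> 'g list \<Rightarrow> nat set" where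
  "word_problem G gens =
     {c. (\<forall>l \<in> set (list_decode c). letter_ok gens l)
         \<and> word_val G gens (list_decode c) = \<one>\<^bsub>G\<^esub>}"

definition is_tileset_graph ::
    "('g, 'b) monoid_scheme \<Rightarrow> 'g set \<Rightarrow> nat set \<Rightarrow> (nat \<times> nat \<times> 'g) set \<Rightarrow> bool" where
  "is_tileset_graph G S A B \<longleftrightarrow> finite A \<and> finite B \<and>
     (\<forall>(a, a', s) \<in> B. a \<in> A \<and> a' \<in> A \<and> s \<in> S \<union> (\<lambda>x. inv\<^bsub>G\<^esub> x) ` S) \<and>
     (\<forall>(a, a', s) \<in> B. (a', a, inv\<^bsub>G\<^esub> s) \<in> B)"

definition bi_infinite_snake ::
    "('g, 'b) monoid_scheme \<Rightarrow> 'g set \<Rightarrow> nat set \<Rightarrow> (nat \<times> nat \<times> 'g) set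
      \<Rightarrow> (int \<Rightarrow> 'g) \<Rightarrow> (int \<Rightarrow> nat) \<Rightarrow> bool" where
  "bi_infinite_snake G S A B \<omega> \<zeta> \<longleftrightarrow>
     inj \<omega> \<and> (\<forall>i. \<omega> i \<in> carrier G) \<and> (\<forall>i. \<zeta> i \<in> A) \<and>
     (\<forall>i. inv\<^bsub>G\<^esub> (\<omega> i) \<otimes>\<^bsub>G\<^esub> \<omega> (i + 1) \<in> S \<union> (\<lambda>x. inv\<^bsub>G\<^esub> x) ` S \<and>
          (\<zeta> i, \<zeta> (i + 1), inv\<^bsub>G\<^esub> (\<omega> i) \<otimes>\<^bsub>G\<^esub> \<omega> (i + 1)) \<in> B)"

text \<open>Coding of tileset graphs by naturals: c codes the list of vertex counts and edges
  list_decode c = n # es, with A = {0..<n} and each e in es coding an edge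
  prod_decode e = (a, r), prod_decode r = (a', l), l a letter code.\<close>
definition code_vertices :: "nat \<Rightarrow> nat set" where
  "code_vertices c = (case list_decode c of [] \<Rightarrow> {} | n # es \<Rightarrow> {0..<n})"

definition code_edges :: "nat \<Rightarrow> (nat \<times> nat \<times> nat) list" where
  "code_edges c = (case list_decode c of [] \<Rightarrow> []
     | n # es \<Rightarrow> map (\<lambda>e. (fst (prod_decode e), prod_decode (snd (prod_decode e)))) es)"

definition code_graph_edges :: "('g, 'b) monoid_scheme \<Rightarrow> 'g list \<Rightarrow> nat \<Rightarrow> (nat \<times> nat \<times> 'g) set" where
  "code_graph_edges G gens c = (\<lambda>(a, a', l). (a, a', letter_val G gens l)) ` set (code_edges c)"

definition snake_problem :: "('g, 'b) monoid_scheme \<Rightarrow> 'g list \<Rightarrow> nat set" where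
  "snake_problem G gens =
     {c. list_decode c \<noteq> [] \<and> (\<forall>(a, a', l) \<in> set (code_edges c). letter_ok gens l) \<and>
         is_tileset_graph G (set gens) (code_vertices c) (code_graph_edges G gens c) \<and>
         (\<exists>\<omega> \<zeta>. bi_infinite_snake G (set gens) (code_vertices c) (code_graph_edges G gens c) \<omega> \<zeta>)}"

end

theory Submission
  imports Defs "HOL-Library.Infinite_Set"
begin

datatype expr = Var nat | Cst nat | Add expr expr | Sb expr expr | Mul expr expr
  | Rc expr expr expr | Wp expr

primrec ev :: "(nat \<Rightarrow> nat) \<Rightarrow> expr \<Rightarrow> (nat \<Rightarrow> nat) \<Rightarrow> nat" where
  "ev w (Var i) \<rho> = \<rho> i"
| "ev w (Cst k) \<rho> = k"
| "ev w (Add a b) \<rho> = ev w a \<rho> + ev w b \<rho>"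
| "ev w (Sb a b) \<rho> = ev w a \<rho> - ev w b \<rho>"
| "ev w (Mul a b) \<rho> = ev w a \<rho> * ev w b \<rho>"
| "ev w (Rc c b s) \<rho> = rec_nat (ev w b \<rho>) (\<lambda>i acc. ev w s (case_nat i (case_nat acc \<rho>))) (ev w c \<rho>)"
| "ev w (Wp e) \<rho> = w (ev w e \<rho>)"

lemma proj': "i < length xs \<Longrightarrow> xs ! i = r \<Longrightarrow> reval (Idf i) xs r"
  using reval.proj by blast

lemmas rintros = reval.zero reval.succ proj' reval.comp reval.prim0 reval.primS

primrec cstf :: "nat \<Rightarrow> recf" where
  "cstf 0 = Zf"
| "cstf (Suc k) = Cnf Sf [cstf k]"

lemma reval_cstf: "reval (cstf k) xs k"
  by (induction k) (auto intro: rintros)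

definition "addf = Prf (Idf 0) (Cnf Sf [Idf 1])"
definition "mulf = Prf Zf (Cnf addf [Idf 1, Idf 2])"
definition "predf = Prf Zf (Idf 0)"
definition "subf = Prf (Idf 0) (Cnf predf [Idf 1])"

lemma reval_addf: "reval addf [a, b] (a + b)"
proof (induction a)
  case 0 then show ?case unfolding addf_def by (auto intro!: rintros)
next
  case (Suc a)
  have "reval (Cnf Sf [Idf 1]) [a, a + b, b] (Suc (a + b))"
    by (rule reval.comp[where ys="[a+b]"]) (auto intro!: rintros)
  then show ?case using Suc unfolding addf_def by (auto intro: rintros)
qed

lemma reval_mulf: "reval mulf [a, b] (a * b)"
proof (induction a)
  case 0 then show ?case unfolding mulf_def by (auto intro!: rintros)
next
  case (Suc a)
  have "reval (Cnf addf [Idf 1, Idf 2]) [a, a * b, b] (a * b + b)"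
    by (rule reval.comp[where ys="[a*b, b]"]) (auto intro!: rintros reval_addf)
  then show ?case using Suc unfolding mulf_def by (auto intro: rintros simp: add.commute)
qed

lemma reval_predf: "reval predf [a] (a - 1)"
proof (induction a)
  case 0 then show ?case by (auto simp: predf_def intro!: rintros)
next
  case (Suc a)
  show ?case unfolding predf_def
    by (rule reval.primS[OF Suc[unfolded predf_def]]) (auto intro: rintros)
qed

lemma reval_subf: "reval subf [b, a] (a - b)"
proof (induction b)
  case 0 then show ?case unfolding subf_def by (auto intro!: rintros)
next
  case (Suc b)
  have "reval (Cnf predf [Idf 1]) [b, a - b, a] (a - Suc b)"
    by (rule reval.comp[where ys="[a - b]"]) (use reval_predf[of "a-b"] in \<open>auto intro!: rintros\<close>)
  then show ?case using Suc unfolding subf_def by (auto intro: rintros)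
qed

primrec cmp :: "recf \<Rightarrow> expr \<Rightarrow> nat \<Rightarrow> recf" where
  "cmp f0 (Var i) n = (if i < n then Idf i else Zf)"
| "cmp f0 (Cst k) n = cstf k"
| "cmp f0 (Add a b) n = Cnf addf [cmp f0 a n, cmp f0 b n]"
| "cmp f0 (Sb a b) n = Cnf subf [cmp f0 b n, cmp f0 a n]"
| "cmp f0 (Mul a b) n = Cnf mulf [cmp f0 a n, cmp f0 b n]"
| "cmp f0 (Rc c b s) n = Cnf (Prf (cmp f0 b n) (cmp f0 s (Suc (Suc n)))) (cmp f0 c n # map Idf [0..<n])"
| "cmp f0 (Wp e) n = Cnf f0 [cmp f0 e n]"

definition envl :: "nat list \<Rightarrow> nat \<Rightarrow> nat" where
  "envl xs = (\<lambda>i. if i < length xs then xs ! i else 0)"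

lemma envl_cons2: "envl (i # a # xs) = case_nat i (case_nat a (envl xs))"
  by (auto simp: envl_def fun_eq_iff split: nat.split)

lemma list_all2_idf: "list_all2 (\<lambda>g y. reval g xs y) (map Idf [0..<length xs]) xs"
  by (auto simp: list_all2_conv_all_nth intro: rintros)

lemma cmp_correct:
  assumes w: "\<And>m. reval f0 [m] (w m)"
  shows "length xs = n \<Longrightarrow> reval (cmp f0 e n) xs (ev w e (envl xs))"
proof (induction e arbitrary: n xs)
  case (Var i) then show ?case by (auto simp: envl_def intro: rintros)
next
  case (Cst k) then show ?case by (simp add: reval_cstf)
next
  case (Add a b) then show ?case
    by (auto intro!: reval.comp[where ys="[ev w a (envl xs), ev w b (envl xs)]"] reval_addf)
next
  case (Sb a b) then show ?case
    by (auto intro!: reval.comp[where ys="[ev w b (envl xs), ev w a (envl xs)]"] reval_subf)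
next
  case (Mul a b) then show ?case
    by (auto intro!: reval.comp[where ys="[ev w a (envl xs), ev w b (envl xs)]"] reval_mulf)
next
  case (Wp e) then show ?case
    by (auto intro!: reval.comp[where ys="[ev w e (envl xs)]"] w)
next
  case (Rc c b s)
  have pr: "reval (Prf (cmp f0 b n) (cmp f0 s (Suc (Suc n)))) (k # xs)
     (rec_nat (ev w b (envl xs)) (\<lambda>i acc. ev w s (case_nat i (case_nat acc (envl xs)))) k)" for k
  proof (induction k)
    case 0 then show ?case using Rc by (auto intro: rintros)
  next
    case (Suc k)
    define r where "r = rec_nat (ev w b (envl xs)) (\<lambda>i acc. ev w s (case_nat i (case_nat acc (envl xs)))) k"
    have l: "length (k # r # xs) = Suc (Suc n)" using Rc.prems by simp
    have "reval (cmp f0 s (Suc (Suc n))) (k # r # xs) (ev w s (envl (k # r # xs)))"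
      by (rule Rc.IH(3)[OF l])
    then have "reval (cmp f0 s (Suc (Suc n))) (k # rec_nat (ev w b (envl xs)) (\<lambda>i acc. ev w s (case_nat i (case_nat acc (envl xs)))) k # xs)
      (ev w s (envl (k # rec_nat (ev w b (envl xs)) (\<lambda>i acc. ev w s (case_nat i (case_nat acc (envl xs)))) k # xs)))"
      unfolding r_def .
    then show ?case using Suc by (auto simp: envl_cons2 intro: rintros)
  qed
  show ?case unfolding cmp.simps ev.simps
    by (rule reval.comp[OF _ pr[of "ev w c (envl xs)"]]) (use Rc list_all2_idf[of xs] in auto)
qed

primrec ren :: "(nat \<Rightarrow> nat) \<Rightarrow> expr \<Rightarrow> expr" where
  "ren f (Var i) = Var (f i)"
| "ren f (Cst k) = Cst k"
| "ren f (Add a b) = Add (ren f a) (ren f b)"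
| "ren f (Sb a b) = Sb (ren f a) (ren f b)"
| "ren f (Mul a b) = Mul (ren f a) (ren f b)"
| "ren f (Rc c b s) = Rc (ren f c) (ren f b) (ren (case_nat 0 (case_nat 1 (\<lambda>j. Suc (Suc (f j))))) s)"
| "ren f (Wp e) = Wp (ren f e)"

lemma ev_ren: "ev w (ren f e) \<rho> = ev w e (\<rho> \<circ> f)"
proof (induction e arbitrary: f \<rho>)
  case (Rc c b s)
  have "case_nat i (case_nat acc \<rho>) \<circ> case_nat 0 (case_nat 1 (\<lambda>j. Suc (Suc (f j))))
      = case_nat i (case_nat acc (\<rho> \<circ> f))" for i acc
    by (auto simp: fun_eq_iff split: nat.split)
  then show ?case by (simp only: ren.simps ev.simps Rc.IH)
qed auto

primrec sb :: "expr \<Rightarrow> (nat \<Rightarrow> expr) \<Rightarrow> expr" where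
  "sb (Var i) \<sigma> = \<sigma> i"
| "sb (Cst k) \<sigma> = Cst k"
| "sb (Add a b) \<sigma> = Add (sb a \<sigma>) (sb b \<sigma>)"
| "sb (Sb a b) \<sigma> = Sb (sb a \<sigma>) (sb b \<sigma>)"
| "sb (Mul a b) \<sigma> = Mul (sb a \<sigma>) (sb b \<sigma>)"
| "sb (Rc c b s) \<sigma> = Rc (sb c \<sigma>) (sb b \<sigma>) (sb s (case_nat (Var 0) (case_nat (Var 1) (\<lambda>j. ren (\<lambda>x. Suc (Suc x)) (\<sigma> j)))))"
| "sb (Wp e) \<sigma> = Wp (sb e \<sigma>)"

lemma ev_sb: "ev w (sb e \<sigma>) \<rho> = ev w e (\<lambda>j. ev w (\<sigma> j) \<rho>)"
proof (induction e arbitrary: \<sigma> \<rho>)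
  case (Rc c b s)
  have "(\<lambda>j. ev w (case_nat (Var 0) (case_nat (Var 1) (\<lambda>j. ren (\<lambda>x. Suc (Suc x)) (\<sigma> j))) j) (case_nat i (case_nat acc \<rho>)))
      = case_nat i (case_nat acc (\<lambda>j. ev w (\<sigma> j) \<rho>))" for i acc
    by (auto simp: fun_eq_iff ev_ren o_def split: nat.split)
  then show ?case by (simp only: ren.simps sb.simps ev.simps Rc.IH)
qed auto

definition cmpt :: "(nat \<Rightarrow> nat) \<Rightarrow> ((nat \<Rightarrow> nat) \<Rightarrow> nat) \<Rightarrow> bool" where
  "cmpt w F \<longleftrightarrow> (\<exists>e. \<forall>\<rho>. ev w e \<rho> = F \<rho>)"

definition cp :: "(nat \<Rightarrow> nat) \<Rightarrow> ((nat \<Rightarrow> nat) \<Rightarrow> bool) \<Rightarrow> bool" where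
  "cp w P \<longleftrightarrow> cmpt w (\<lambda>\<rho>. if P \<rho> then 1 else 0)"

lemma cmpt_cong: "cmpt w F \<Longrightarrow> (\<And>\<rho>. F \<rho> = G \<rho>) \<Longrightarrow> cmpt w G"
  unfolding cmpt_def by metis

lemma c_var: "cmpt w (\<lambda>\<rho>. \<rho> i)"
  unfolding cmpt_def by (rule exI[of _ "Var i"]) simp

lemma c_const: "cmpt w (\<lambda>\<rho>. k)"
  unfolding cmpt_def by (rule exI[of _ "Cst k"]) simp

lemma c_add: "cmpt w A \<Longrightarrow> cmpt w B \<Longrightarrow> cmpt w (\<lambda>\<rho>. A \<rho> + B \<rho>)"
  unfolding cmpt_def by (metis ev.simps(3))

lemma c_sub: "cmpt w A \<Longrightarrow> cmpt w B \<Longrightarrow> cmpt w (\<lambda>\<rho>. A \<rho> - B \<rho>)"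
  unfolding cmpt_def by (metis ev.simps(4))

lemma c_mul: "cmpt w A \<Longrightarrow> cmpt w B \<Longrightarrow> cmpt w (\<lambda>\<rho>. A \<rho> * B \<rho>)"
  unfolding cmpt_def by (metis ev.simps(5))

lemma c_wp: "cmpt w A \<Longrightarrow> cmpt w (\<lambda>\<rho>. w (A \<rho>))"
  unfolding cmpt_def by (metis ev.simps(7))

lemma c_rec:
  assumes "cmpt w C" "cmpt w B" "cmpt w (\<lambda>\<rho>. S (\<rho> 0) (\<rho> 1) (\<lambda>j. \<rho> (Suc (Suc j))))"
  shows "cmpt w (\<lambda>\<rho>. rec_nat (B \<rho>) (\<lambda>i acc. S i acc \<rho>) (C \<rho>))"
proof -
  obtain ec eb es where h: "\<And>\<rho>. ev w ec \<rho> = C \<rho>" "\<And>\<rho>. ev w eb \<rho> = B \<rho>"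
    "\<And>\<rho>. ev w es \<rho> = S (\<rho> 0) (\<rho> 1) (\<lambda>j. \<rho> (Suc (Suc j)))"
    using assms unfolding cmpt_def by metis
  have "ev w (Rc ec eb es) \<rho> = rec_nat (B \<rho>) (\<lambda>i acc. S i acc \<rho>) (C \<rho>)" for \<rho>
    by (simp add: h)
  then show ?thesis unfolding cmpt_def by blast
qed

lemma c_subst:
  assumes "cmpt w F" "\<And>j. cmpt w (G j)"
  shows "cmpt w (\<lambda>\<rho>. F (\<lambda>j. G j \<rho>))"
proof -
  obtain e where e: "\<And>\<rho>. ev w e \<rho> = F \<rho>" using assms(1) unfolding cmpt_def by blast
  have "\<forall>j. \<exists>e. \<forall>\<rho>. ev w e \<rho> = G j \<rho>" using assms(2) unfolding cmpt_def by blast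
  then obtain \<sigma> where s: "\<And>j \<rho>. ev w (\<sigma> j) \<rho> = G j \<rho>" by metis
  have "ev w (sb e \<sigma>) \<rho> = F (\<lambda>j. G j \<rho>)" for \<rho> by (simp add: ev_sb s e)
  then show ?thesis unfolding cmpt_def by blast
qed

lemma c_comp1: "cmpt w (\<lambda>\<rho>. f (\<rho> 0)) \<Longrightarrow> cmpt w A \<Longrightarrow> cmpt w (\<lambda>\<rho>. f (A \<rho>))"
  using c_subst[of w "\<lambda>\<rho>. f (\<rho> 0)" "\<lambda>j. A"] by simp

lemma c_comp2: "cmpt w (\<lambda>\<rho>. f (\<rho> 0) (\<rho> 1)) \<Longrightarrow> cmpt w A \<Longrightarrow> cmpt w B \<Longrightarrow> cmpt w (\<lambda>\<rho>. f (A \<rho>) (B \<rho>))"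
  using c_subst[of w "\<lambda>\<rho>. f (\<rho> 0) (\<rho> 1)" "\<lambda>j. if j = 0 then A else B"] by simp

lemma c_ren: "cmpt w F \<Longrightarrow> cmpt w (\<lambda>\<rho>. F (\<lambda>j. \<rho> (h j)))"
  using c_subst[of w F "\<lambda>j \<rho>. \<rho> (h j)"] c_var by blast

lemma c_sum:
  assumes "cmpt w C" "cmpt w (\<lambda>\<rho>. H (\<rho> 0) (\<lambda>j. \<rho> (Suc j)))"
  shows "cmpt w (\<lambda>\<rho>. \<Sum>i<C \<rho>. H i \<rho>)"
proof -
  have r: "rec_nat 0 (\<lambda>i acc. acc + H i \<rho>) n = (\<Sum>i<n. H i \<rho>)" for n \<rho>
    by (induction n) auto
  have "cmpt w (\<lambda>\<rho>. H (\<rho> 0) (\<lambda>j. \<rho> (Suc (Suc j))))"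
    using c_ren[OF assms(2), of "case_nat 0 (\<lambda>j. Suc (Suc j))"] by simp
  then have "cmpt w (\<lambda>\<rho>. \<rho> 1 + H (\<rho> 0) (\<lambda>j. \<rho> (Suc (Suc j))))"
    by (intro c_add c_var)
  from c_rec[OF assms(1) c_const[of w 0] this] show ?thesis by (rule cmpt_cong) (simp add: r)
qed

lemma c_suc: "cmpt w A \<Longrightarrow> cmpt w (\<lambda>\<rho>. Suc (A \<rho>))"
  using c_add[OF _ c_const, of w A 1] by simp

lemma cp_cmpt: "cp w P \<Longrightarrow> cmpt w (\<lambda>\<rho>. if P \<rho> then 1 else 0)"
  unfolding cp_def .

lemma c_if: "cp w P \<Longrightarrow> cmpt w A \<Longrightarrow> cmpt w B \<Longrightarrow> cmpt w (\<lambda>\<rho>. if P \<rho> then A \<rho> else B \<rho>)"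
proof -
  assume a: "cp w P" "cmpt w A" "cmpt w B"
  have "cmpt w (\<lambda>\<rho>. (if P \<rho> then 1 else 0) * A \<rho> + (1 - (if P \<rho> then 1 else 0)) * B \<rho>)"
    using a unfolding cp_def by (intro c_add c_mul c_sub c_const)
  then show ?thesis by (rule cmpt_cong) auto
qed

lemma cp_eq: "cmpt w A \<Longrightarrow> cmpt w B \<Longrightarrow> cp w (\<lambda>\<rho>. A \<rho> = B \<rho>)"
proof -
  assume a: "cmpt w A" "cmpt w B"
  have "cmpt w (\<lambda>\<rho>. 1 - ((A \<rho> - B \<rho>) + (B \<rho> - A \<rho>)))"
    using a by (intro c_add c_sub c_const)
  moreover have "(1 - ((A \<rho> - B \<rho>) + (B \<rho> - A \<rho>))) = (if A \<rho> = B \<rho> then 1 else 0)" for \<rho>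
    by auto
  ultimately show ?thesis unfolding cp_def by simp
qed

lemma cp_less: "cmpt w A \<Longrightarrow> cmpt w B \<Longrightarrow> cp w (\<lambda>\<rho>. A \<rho> < B \<rho>)"
proof -
  assume a: "cmpt w A" "cmpt w B"
  have "cmpt w (\<lambda>\<rho>. 1 - (1 - (B \<rho> - A \<rho>)))"
    using a by (intro c_add c_sub c_const)
  moreover have "(1 - (1 - (B \<rho> - A \<rho>))) = (if A \<rho> < B \<rho> then 1 else 0)" for \<rho>
    by auto
  ultimately show ?thesis unfolding cp_def by simp
qed

lemma cp_le: "cmpt w A \<Longrightarrow> cmpt w B \<Longrightarrow> cp w (\<lambda>\<rho>. A \<rho> \<le> B \<rho>)"
proof -
  assume a: "cmpt w A" "cmpt w B"
  have "cmpt w (\<lambda>\<rho>. 1 - (A \<rho> - B \<rho>))"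
    using a by (intro c_add c_sub c_const)
  moreover have "(1 - (A \<rho> - B \<rho>)) = (if A \<rho> \<le> B \<rho> then 1 else 0)" for \<rho>
    by auto
  ultimately show ?thesis unfolding cp_def by simp
qed

lemma cp_not: "cp w P \<Longrightarrow> cp w (\<lambda>\<rho>. \<not> P \<rho>)"
proof -
  assume a: "cp w P"
  have "cmpt w (\<lambda>\<rho>. 1 - (if P \<rho> then 1 else 0))"
    using a unfolding cp_def by (intro c_sub c_const)
  then show ?thesis unfolding cp_def by (rule cmpt_cong) auto
qed

lemma cp_and: "cp w P \<Longrightarrow> cp w Q \<Longrightarrow> cp w (\<lambda>\<rho>. P \<rho> \<and> Q \<rho>)"
proof -
  assume a: "cp w P" "cp w Q"
  have "cmpt w (\<lambda>\<rho>. (if P \<rho> then 1 else 0) * (if Q \<rho> then 1 else 0))"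
    using a unfolding cp_def by (intro c_mul)
  then show ?thesis unfolding cp_def by (rule cmpt_cong) auto
qed

lemma cp_or: "cp w P \<Longrightarrow> cp w Q \<Longrightarrow> cp w (\<lambda>\<rho>. P \<rho> \<or> Q \<rho>)"
  using cp_not[of w "\<lambda>\<rho>. \<not> P \<rho> \<and> \<not> Q \<rho>"] cp_and[OF cp_not cp_not] by auto

lemma cp_imp: "cp w P \<Longrightarrow> cp w Q \<Longrightarrow> cp w (\<lambda>\<rho>. P \<rho> \<longrightarrow> Q \<rho>)"
  using cp_or[OF cp_not, of w P Q] by simp

lemma cp_all:
  assumes "cmpt w C" "cp w (\<lambda>\<rho>. P (\<rho> 0) (\<lambda>j. \<rho> (Suc j)))"
  shows "cp w (\<lambda>\<rho>. \<forall>i<C \<rho>. P i \<rho>)"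
proof -
  have h: "cmpt w (\<lambda>\<rho>. 1 - (if P (\<rho> 0) (\<lambda>j. \<rho> (Suc j)) then 1 else 0))"
    using assms(2) unfolding cp_def by (intro c_sub c_const)
  have "cmpt w (\<lambda>\<rho>. 1 - (\<Sum>i<C \<rho>. 1 - (if P i \<rho> then 1 else 0)))"
    by (rule c_sub[OF c_const], rule c_sum[OF assms(1)], rule h)
  moreover have "(1 - (\<Sum>i<C \<rho>. 1 - (if P i \<rho> then 1 else 0::nat))) = (if \<forall>i<C \<rho>. P i \<rho> then 1 else 0)" for \<rho>
  proof -
    have "(\<Sum>i<C \<rho>. 1 - (if P i \<rho> then 1 else 0::nat)) = 0 \<longleftrightarrow> (\<forall>i<C \<rho>. P i \<rho>)"
      by (auto simp: sum_eq_0_iff)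
    then show ?thesis
      by (metis (no_types, lifting) diff_is_0_eq' less_one linorder_not_le minus_nat.diff_0)
  qed
  ultimately show ?thesis unfolding cp_def by simp
qed

lemma cp_ex:
  assumes "cmpt w C" "cp w (\<lambda>\<rho>. P (\<rho> 0) (\<lambda>j. \<rho> (Suc j)))"
  shows "cp w (\<lambda>\<rho>. \<exists>i<C \<rho>. P i \<rho>)"
proof -
  have "cp w (\<lambda>\<rho>. \<not> (\<forall>i<C \<rho>. \<not> P i \<rho>))"
    by (intro cp_not cp_all[OF assms(1)] cp_not assms(2))
  then show ?thesis by simp
qed

lemma cp_true: "cp w (\<lambda>\<rho>. True)"
  unfolding cp_def by (simp add: c_const)

lemmas cintros = c_var c_const c_add c_sub c_mul c_wp c_suc c_if cp_cmpt
  cp_eq cp_less cp_le cp_not cp_and cp_or cp_imp cp_true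

lemmas cintros2 = cintros c_sum cp_all cp_ex

lemma triangle_rec: "triangle n = rec_nat 0 (\<lambda>i acc. acc + Suc i) n"
  by (induction n) auto

lemma c_triangle0: "cmpt w (\<lambda>\<rho>. triangle (\<rho> 0))"
proof -
  have "cmpt w (\<lambda>\<rho>. rec_nat 0 (\<lambda>i acc. acc + Suc i) (\<rho> 0))"
    by (rule c_rec[where S="\<lambda>i acc \<rho>. acc + Suc i", OF c_var c_const]) (intro cintros)
  then show ?thesis by (rule cmpt_cong) (simp add: triangle_rec)
qed

lemma c_triangle: "cmpt w A \<Longrightarrow> cmpt w (\<lambda>\<rho>. triangle (A \<rho>))"
  by (rule c_comp1[OF c_triangle0])

lemma c_pe: "cmpt w A \<Longrightarrow> cmpt w B \<Longrightarrow> cmpt w (\<lambda>\<rho>. prod_encode (A \<rho>, B \<rho>))"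
proof -
  assume a: "cmpt w A" "cmpt w B"
  have "cmpt w (\<lambda>\<rho>. triangle (\<rho> 0 + \<rho> 1) + \<rho> 0)"
    by (intro cintros c_triangle)
  then have "cmpt w (\<lambda>\<rho>. prod_encode (\<rho> 0, \<rho> 1))"
    by (rule cmpt_cong) (simp add: prod_encode_def)
  from c_comp2[OF this a] show ?thesis .
qed

lemma prod_decode_le: "prod_decode n = (a, b) \<Longrightarrow> a \<le> n \<and> b \<le> n"
  by (metis le_prod_encode_1 le_prod_encode_2 prod_decode_inverse)

lemma pe_eq_iff: "prod_encode (x, y) = n \<longleftrightarrow> prod_decode n = (x, y)"
  by (metis prod_decode_inverse prod_encode_inverse)

lemma pf_sum: "fst (prod_decode n) = (\<Sum>x<Suc n. \<Sum>y<Suc n. if prod_encode (x, y) = n then x else 0)"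
proof -
  obtain a b where ab: "prod_decode n = (a, b)" by fastforce
  from prod_decode_le[OF ab] have le: "a < Suc n" "b < Suc n" by auto
  have "(\<Sum>x<Suc n. \<Sum>y<Suc n. if prod_encode (x, y) = n then x else 0)
      = (\<Sum>x<Suc n. if x = a then (\<Sum>y<Suc n. if y = b then x else 0) else 0)"
    by (intro sum.cong refl) (auto simp: pe_eq_iff ab)
  also have "\<dots> = a" using le by (simp add: sum.delta)
  finally show ?thesis by (simp add: ab)
qed

lemma ps_sum: "snd (prod_decode n) = (\<Sum>x<Suc n. \<Sum>y<Suc n. if prod_encode (x, y) = n then y else 0)"
proof -
  obtain a b where ab: "prod_decode n = (a, b)" by fastforce
  from prod_decode_le[OF ab] have le: "a < Suc n" "b < Suc n" by auto
  have "(\<Sum>x<Suc n. \<Sum>y<Suc n. if prod_encode (x, y) = n then y else 0)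
      = (\<Sum>x<Suc n. if x = a then (\<Sum>y<Suc n. if y = b then y else 0) else 0)"
    by (intro sum.cong refl) (auto simp: pe_eq_iff ab)
  also have "\<dots> = b" using le by (simp add: sum.delta)
  finally show ?thesis by (simp add: ab)
qed

lemma c_pf: "cmpt w A \<Longrightarrow> cmpt w (\<lambda>\<rho>. fst (prod_decode (A \<rho>)))"
proof -
  assume a: "cmpt w A"
  have "cmpt w (\<lambda>\<rho>. \<Sum>x<Suc (\<rho> 0). \<Sum>y<Suc (\<rho> 0). if prod_encode (x, y) = \<rho> 0 then x else 0)"
    by (intro cintros2 c_pe)
  then have "cmpt w (\<lambda>\<rho>. fst (prod_decode (\<rho> 0)))"
    by (rule cmpt_cong) (simp add: pf_sum)
  from c_comp1[OF this a] show ?thesis .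
qed

lemma c_ps: "cmpt w A \<Longrightarrow> cmpt w (\<lambda>\<rho>. snd (prod_decode (A \<rho>)))"
proof -
  assume a: "cmpt w A"
  have "cmpt w (\<lambda>\<rho>. \<Sum>x<Suc (\<rho> 0). \<Sum>y<Suc (\<rho> 0). if prod_encode (x, y) = \<rho> 0 then y else 0)"
    by (intro cintros2 c_pe)
  then have "cmpt w (\<lambda>\<rho>. snd (prod_decode (\<rho> 0)))"
    by (rule cmpt_cong) (simp add: ps_sum)
  from c_comp1[OF this a] show ?thesis .
qed

definition ltl :: "nat \<Rightarrow> nat" where "ltl c = snd (prod_decode (c - 1))"

lemma c_ltli: "cmpt w I \<Longrightarrow> cmpt w A \<Longrightarrow> cmpt w (\<lambda>\<rho>. (ltl ^^ I \<rho>) (A \<rho>))"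
proof -
  assume a: "cmpt w I" "cmpt w A"
  have r: "(ltl ^^ n) c = rec_nat c (\<lambda>i acc. ltl acc) n" for n c
    by (induction n) auto
  have "cmpt w (\<lambda>\<rho>. rec_nat (A \<rho>) (\<lambda>i acc. ltl acc) (I \<rho>))"
    by (rule c_rec[where S="\<lambda>i acc \<rho>. ltl acc", OF a(1) a(2)]) (unfold ltl_def, intro cintros c_ps)
  then show ?thesis by (rule cmpt_cong) (simp add: r)
qed

lemma prod_decode_0: "prod_decode 0 = (0, 0)"
  by (simp add: prod_decode_def prod_decode_aux.simps)

lemma list_decode_ltl: "list_decode (ltl c) = tl (list_decode c)"
  by (cases c) (auto simp: ltl_def prod_decode_0 split: prod.split)

lemma list_decode_ltli: "list_decode ((ltl ^^ i) c) = drop i (list_decode c)"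
  by (induction i) (auto simp: list_decode_ltl drop_Suc tl_drop)

lemma list_decode_eq_Nil: "list_decode x = [] \<longleftrightarrow> x = 0"
  by (metis list_decode.simps(1) list_decode_inverse list_encode.simps(1))

lemma length_le_list_encode: "length xs \<le> list_encode xs"
  by (induction xs) (auto simp: le_prod_encode_2 intro: le_trans[OF _ le_prod_encode_2])

lemma length_list_decode_le: "length (list_decode c) \<le> c"
  using length_le_list_encode[of "list_decode c"] by simp

lemma ltli_zero_iff: "(ltl ^^ i) c = 0 \<longleftrightarrow> length (list_decode c) \<le> i"
  by (metis drop_eq_Nil list_decode_eq_Nil list_decode_ltli)

lemma c_len: "cmpt w A \<Longrightarrow> cmpt w (\<lambda>\<rho>. length (list_decode (A \<rho>)))"
proof -
  assume a: "cmpt w A"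
  have "cmpt w (\<lambda>\<rho>. \<Sum>i<\<rho> 0. if (ltl ^^ i) (\<rho> 0) = 0 then 0 else 1)"
    by (intro cintros2 c_ltli)
  moreover have "(\<Sum>i<c. if (ltl ^^ i) c = 0 then 0 else 1) = length (list_decode c)" for c
  proof -
    have "(\<Sum>i<c. if (ltl ^^ i) c = 0 then 0 else 1::nat) = (\<Sum>i<c. if i < length (list_decode c) then 1 else 0)"
      by (intro sum.cong refl) (auto simp: ltli_zero_iff)
    also have "\<dots> = card {i. i < c \<and> i < length (list_decode c)}"
      by (simp add: sum.If_cases Int_def)
    also have "{i. i < c \<and> i < length (list_decode c)} = {..<length (list_decode c)}"
      using length_list_decode_le[of c] by auto
    finally show ?thesis by simp
  qed
  ultimately have "cmpt w (\<lambda>\<rho>. length (list_decode (\<rho> 0)))"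
    by (rule cmpt_cong)
  from c_comp1[OF this a] show ?thesis .
qed

definition lnth :: "nat \<Rightarrow> nat \<Rightarrow> nat" where
  "lnth c i = fst (prod_decode ((ltl ^^ i) c - 1))"

lemma c_lnth: "cmpt w A \<Longrightarrow> cmpt w I \<Longrightarrow> cmpt w (\<lambda>\<rho>. lnth (A \<rho>) (I \<rho>))"
  unfolding lnth_def by (intro c_pf c_sub c_ltli c_const)

lemma hd_list_decode: "x > 0 \<Longrightarrow> hd (list_decode x) = fst (prod_decode (x - 1))"
  by (cases x) (auto split: prod.split)

lemma lnth_eq: "i < length (list_decode c) \<Longrightarrow> lnth c i = list_decode c ! i"
proof -
  assume i: "i < length (list_decode c)"
  then have nz: "(ltl ^^ i) c > 0" using ltli_zero_iff by (metis not_gr0 not_le)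
  have "list_decode c ! i = hd (drop i (list_decode c))" using i by (simp add: hd_drop_conv_nth)
  also have "\<dots> = hd (list_decode ((ltl ^^ i) c))" by (simp add: list_decode_ltli)
  finally show ?thesis using hd_list_decode[OF nz] by (simp add: lnth_def)
qed

lemma c_rep: "cmpt w E \<Longrightarrow> cmpt w N \<Longrightarrow> cmpt w (\<lambda>\<rho>. list_encode (replicate (N \<rho>) (E \<rho>)))"
proof -
  assume a: "cmpt w E" "cmpt w N"
  have r: "list_encode (replicate n e) = rec_nat 0 (\<lambda>i acc. Suc (prod_encode (e, acc))) n" for n e
    by (induction n) auto
  have "cmpt w (\<lambda>\<rho>. rec_nat 0 (\<lambda>i acc. Suc (prod_encode (E \<rho>, acc))) (N \<rho>))"
    by (rule c_rec[where S="\<lambda>i acc \<rho>. Suc (prod_encode (E \<rho>, acc))", OF a(2) c_const])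
      (intro cintros c_pe c_ren[OF a(1)])
  then show ?thesis by (rule cmpt_cong) (simp add: r)
qed

lemma triangle_mono: "a \<le> b \<Longrightarrow> triangle a \<le> triangle b"
  unfolding triangle_def by (intro div_le_mono mult_le_mono) auto

lemma prod_encode_mono: "a \<le> a' \<Longrightarrow> b \<le> b' \<Longrightarrow> prod_encode (a, b) \<le> prod_encode (a', b')"
  unfolding prod_encode_def using triangle_mono[of "a + b" "a' + b'"] by simp

lemma list_encode_le_rep:
  "\<forall>x\<in>set xs. x \<le> e \<Longrightarrow> list_encode xs \<le> list_encode (replicate (length xs) e)"
  by (induction xs) (auto intro: prod_encode_mono)

definition "esrc e = fst (prod_decode e)"
definition "etgt e = fst (prod_decode (snd (prod_decode e)))"
definition "eltr e = snd (prod_decode (snd (prod_decode e)))"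
definition "ed c x = lnth c (Suc x)"
definition "nE c = length (list_decode c) - 1"
definition "nV c = lnth c 0"
definition "code2 a b = Suc (prod_encode (a, Suc (prod_encode (b, 0))))"

definition seg :: "nat \<Rightarrow> nat \<Rightarrow> nat \<Rightarrow> nat \<Rightarrow> nat" where
  "seg c p i j = rec_nat 0 (\<lambda>m acc. Suc (prod_encode (eltr (ed c (lnth p (j - Suc m))), acc))) (j - i)"

definition Wc :: "(nat \<Rightarrow> nat) \<Rightarrow> nat \<Rightarrow> nat \<Rightarrow> bool" where
  "Wc w K c \<longleftrightarrow> 0 < length (list_decode c) \<and>
    (\<forall>x<nE c. eltr (ed c x) < 2 * K \<and> esrc (ed c x) < nV c \<and> etgt (ed c x) < nV c \<and>
       (\<exists>y<nE c. esrc (ed c y) = etgt (ed c x) \<and> etgt (ed c y) = esrc (ed c x) \<and>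
          w (code2 (eltr (ed c y)) (eltr (ed c x))) = 1))"

definition Pc :: "(nat \<Rightarrow> nat) \<Rightarrow> nat \<Rightarrow> nat \<Rightarrow> bool" where
  "Pc w c N \<longleftrightarrow> (\<exists>p<Suc (list_encode (replicate N (nE c))). \<forall>i<N. (ltl ^^ i) p \<noteq> 0 \<and> lnth p i < nE c \<and>
     (Suc i < N \<longrightarrow> etgt (ed c (lnth p i)) = esrc (ed c (lnth p (Suc i)))) \<and>
     (\<forall>j<Suc N. i < j \<longrightarrow> w (seg c p i j) = 0))"

lemma c_esrc: "cmpt w A \<Longrightarrow> cmpt w (\<lambda>\<rho>. esrc (A \<rho>))"
  unfolding esrc_def by (intro c_pf)
lemma c_etgt: "cmpt w A \<Longrightarrow> cmpt w (\<lambda>\<rho>. etgt (A \<rho>))"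
  unfolding etgt_def by (intro c_pf c_ps)
lemma c_eltr: "cmpt w A \<Longrightarrow> cmpt w (\<lambda>\<rho>. eltr (A \<rho>))"
  unfolding eltr_def by (intro c_ps)
lemma c_ed: "cmpt w A \<Longrightarrow> cmpt w X \<Longrightarrow> cmpt w (\<lambda>\<rho>. ed (A \<rho>) (X \<rho>))"
  unfolding ed_def by (intro c_lnth c_suc)
lemma c_nE: "cmpt w A \<Longrightarrow> cmpt w (\<lambda>\<rho>. nE (A \<rho>))"
  unfolding nE_def by (intro c_sub c_len c_const)
lemma c_nV: "cmpt w A \<Longrightarrow> cmpt w (\<lambda>\<rho>. nV (A \<rho>))"
  unfolding nV_def by (intro c_lnth c_const)
lemma c_code2: "cmpt w A \<Longrightarrow> cmpt w B \<Longrightarrow> cmpt w (\<lambda>\<rho>. code2 (A \<rho>) (B \<rho>))"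
  unfolding code2_def by (intro c_suc c_pe c_const)

lemma c_seg: "cmpt w C \<Longrightarrow> cmpt w P \<Longrightarrow> cmpt w I \<Longrightarrow> cmpt w J \<Longrightarrow>
  cmpt w (\<lambda>\<rho>. seg (C \<rho>) (P \<rho>) (I \<rho>) (J \<rho>))"
proof -
  assume a: "cmpt w C" "cmpt w P" "cmpt w I" "cmpt w J"
  show ?thesis unfolding seg_def
    by (rule c_rec[where S="\<lambda>m acc \<rho>. Suc (prod_encode (eltr (ed (C \<rho>) (lnth (P \<rho>) (J \<rho> - Suc m))), acc))"])
      (intro c_sub a c_const c_suc c_pe c_eltr c_ed c_lnth c_ren[OF a(1)] c_ren[OF a(2)] c_ren[OF a(4)] c_var)+
qed

lemmas dintros = cintros2 c_esrc c_etgt c_eltr c_ed c_nE c_nV c_code2 c_seg c_len c_ltli c_lnth c_rep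

lemma cp_D: "cp w (\<lambda>\<rho>. Wc w K (\<rho> 0) \<and> Pc w (\<rho> 0) (\<rho> 1))"
  unfolding Wc_def Pc_def by (intro dintros)

section \<open>Compactness\<close>

definition cV :: "(nat \<Rightarrow> int \<Rightarrow> nat) \<Rightarrow> nat set \<Rightarrow> int \<Rightarrow> nat" where
  "cV f S x = (SOME v. infinite {N\<in>S. f N x = v})"

primrec cT :: "(nat \<Rightarrow> int \<Rightarrow> nat) \<Rightarrow> nat \<Rightarrow> nat set" where
  "cT f 0 = UNIV"
| "cT f (Suc k) = {N \<in> cT f k. f N (int_decode k) = cV f (cT f k) (int_decode k)}"

lemma cV_inf:
  assumes bd: "\<And>N x. f N x \<le> M" and inf: "infinite S"
  shows "infinite {N\<in>S. f N x = cV f S x}"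
proof -
  have "\<exists>v. infinite {N\<in>S. f N x = v}"
  proof (rule ccontr)
    assume "\<not> ?thesis"
    then have "finite (\<Union>v\<in>{..M}. {N\<in>S. f N x = v})" by auto
    moreover have "S \<subseteq> (\<Union>v\<in>{..M}. {N\<in>S. f N x = v})" using bd by auto
    ultimately show False using inf finite_subset by blast
  qed
  then show ?thesis unfolding cV_def by (rule someI_ex)
qed

lemma cT_inf: assumes "\<And>N x. f N x \<le> M" shows "infinite (cT f k)"
proof (induction k)
  case (Suc k) show ?case using cV_inf[OF assms Suc.IH] by simp
qed simp

lemma cT_mono: "k \<le> k' \<Longrightarrow> cT f k' \<subseteq> cT f k"
proof (induction k' rule: dec_induct)
  case (step n) then show ?case by auto
qed simp

lemma compactness:
  fixes f :: "nat \<Rightarrow> int \<Rightarrow> nat"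
  assumes bd: "\<And>N x. f N x \<le> M"
  shows "\<exists>g. \<forall>F r. finite F \<longrightarrow> (\<exists>N\<ge>r. \<forall>x\<in>F. g x = f N x)"
proof -
  define g where "g x = cV f (cT f (int_encode x)) x" for x
  have "\<exists>N\<ge>r. \<forall>x\<in>F. g x = f N x" if F: "finite F" for F :: "int set" and r :: nat
  proof -
  obtain K where K: "\<forall>k\<in>int_encode ` F. k < K"
    using F finite_nat_set_iff_bounded by blast
  have "infinite (cT f K)" using cT_inf[OF bd] .
  then obtain N where N: "N \<in> cT f K" "r \<le> N"
    using infinite_nat_iff_unbounded_le by blast
  have "g x = f N x" if x: "x \<in> F" for x
  proof -
    let ?k = "int_encode x"
    have "Suc ?k \<le> K" using K x by auto
    then have "N \<in> cT f (Suc ?k)" using cT_mono N(1) by blast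
    then show ?thesis by (simp add: g_def)
  qed
  then show "\<exists>N\<ge>r. \<forall>x\<in>F. g x = f N x" using N(2) by blast
  qed
  then show ?thesis by blast
qed

section \<open>Words\<close>

context group
begin

lemma letter_ok_mem: "letter_ok gens l \<Longrightarrow> gens ! (l div 2) \<in> set gens"
  unfolding letter_ok_def by auto

lemma letter_val_carrier:
  "set gens \<subseteq> carrier G \<Longrightarrow> letter_ok gens l \<Longrightarrow> letter_val G gens l \<in> carrier G"
  using letter_ok_mem[of gens l] by (auto simp: letter_val_def)

lemma letter_val_S:
  "letter_ok gens l \<Longrightarrow> letter_val G gens l \<in> set gens \<union> (\<lambda>x. inv x) ` set gens"
  using letter_ok_mem[of gens l] by (auto simp: letter_val_def)

lemma word_val_carrier:
  "set gens \<subseteq> carrier G \<Longrightarrow> \<forall>l\<in>set ls. letter_ok gens l \<Longrightarrow> word_val G gens ls \<in> carrier G"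
  by (induction ls) (auto simp: word_val_def letter_val_carrier)

lemma word_val_snoc:
  assumes "set gens \<subseteq> carrier G" "\<forall>l\<in>set ls. letter_ok gens l" "letter_ok gens x"
  shows "word_val G gens (ls @ [x]) = word_val G gens ls \<otimes> letter_val G gens x"
  using assms(2)
proof (induction ls)
  case Nil then show ?case using letter_val_carrier[OF assms(1,3)] by (simp add: word_val_def)
next
  case (Cons a ls)
  then have "word_val G gens ((a # ls) @ [x]) = letter_val G gens a \<otimes> (word_val G gens ls \<otimes> letter_val G gens x)"
    by (simp add: word_val_def)
  also have "\<dots> = (letter_val G gens a \<otimes> word_val G gens ls) \<otimes> letter_val G gens x"
    using Cons.prems letter_val_carrier[OF assms(1)] word_val_carrier[OF assms(1)] assms(3)
    by (simp add: m_assoc)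
  finally show ?case by (simp add: word_val_def)
qed

lemma telescope:
  assumes gc: "set gens \<subseteq> carrier G" and om: "\<And>t. \<Omega> t \<in> carrier G"
    and ok: "\<And>t. letter_ok gens (L t)"
    and st: "\<And>t. letter_val G gens (L t) = inv (\<Omega> t) \<otimes> \<Omega> (Suc t)"
  shows "word_val G gens (map L [i..<i+m]) = inv (\<Omega> i) \<otimes> \<Omega> (i + m)"
proof (induction m)
  case 0 then show ?case using om by (simp add: word_val_def)
next
  case (Suc m)
  have "word_val G gens (map L [i..<i+Suc m]) = word_val G gens (map L [i..<i+m]) \<otimes> letter_val G gens (L (i+m))"
    using word_val_snoc[OF gc _ ok] ok by simp
  also have "\<dots> = (inv (\<Omega> i) \<otimes> \<Omega> (i + m)) \<otimes> (inv (\<Omega> (i+m)) \<otimes> \<Omega> (Suc (i + m)))"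
    using Suc st by simp
  also have "\<dots> = inv (\<Omega> i) \<otimes> \<Omega> (i + Suc m)"
    using om by (simp add: m_assoc[symmetric]) (simp add: m_assoc)
  finally show ?case .
qed

end

lemma struct_lemmas:
  assumes ne: "list_decode c \<noteq> []"
  shows "nE c = length (list_decode c) - 1"
    and "code_vertices c = {0..<nV c}"
    and "set (code_edges c) = (\<lambda>x. (esrc (ed c x), etgt (ed c x), eltr (ed c x))) ` {..<nE c}"
    and "code_graph_edges G gens c = (\<lambda>x. (esrc (ed c x), etgt (ed c x), letter_val G gens (eltr (ed c x)))) ` {..<nE c}"
proof -
  obtain n es where ld: "list_decode c = n # es" using ne by (cases "list_decode c") auto
  have nV: "nV c = n" unfolding nV_def using lnth_eq[of 0 c] ld by simp
  have nE: "nE c = length es" unfolding nE_def using ld by simp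
  have ed: "ed c x = es ! x" if "x < length es" for x
    unfolding ed_def using lnth_eq[of "Suc x" c] ld that by simp
  show "nE c = length (list_decode c) - 1" by (simp add: nE_def)
  show "code_vertices c = {0..<nV c}" by (simp add: code_vertices_def ld nV)
  have h: "(\<lambda>e. (fst (prod_decode e), prod_decode (snd (prod_decode e)))) = (\<lambda>e. (esrc e, etgt e, eltr e))"
    by (auto simp: esrc_def etgt_def eltr_def fun_eq_iff)
  have ce: "code_edges c = map (\<lambda>e. (esrc e, etgt e, eltr e)) es"
    by (simp add: code_edges_def ld h)
  have es: "set es = (\<lambda>x. ed c x) ` {..<nE c}"
    by (auto simp: nE ed in_set_conv_nth image_iff)
  show se: "set (code_edges c) = (\<lambda>x. (esrc (ed c x), etgt (ed c x), eltr (ed c x))) ` {..<nE c}"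
    by (simp add: ce es image_image)
  show "code_graph_edges G gens c = (\<lambda>x. (esrc (ed c x), etgt (ed c x), letter_val G gens (eltr (ed c x)))) ` {..<nE c}"
    by (simp add: code_graph_edges_def se image_image)
qed

definition wpi :: "('g, 'b) monoid_scheme \<Rightarrow> 'g list \<Rightarrow> nat \<Rightarrow> nat" where
  "wpi G gens n = (if n \<in> word_problem G gens then 1 else 0)"

lemma wpi_list:
  "\<forall>l\<in>set ls. letter_ok gens l \<Longrightarrow> wpi G gens (list_encode ls) = (if word_val G gens ls = \<one>\<^bsub>G\<^esub> then 1 else 0)"
  by (simp add: wpi_def word_problem_def)

lemma seg_eq_gen:
  "m \<le> j \<Longrightarrow> rec_nat 0 (\<lambda>m acc. Suc (prod_encode (L (j - Suc m), acc))) m = list_encode (map L [j-m..<j])"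
proof (induction m)
  case (Suc m)
  have "[j - Suc m..<j] = (j - Suc m) # [j - m..<j]"
    using Suc.prems upt_conv_Cons[of "j - Suc m" j] by (simp add: Suc_diff_Suc)
  then show ?case using Suc by simp
qed simp

lemma seg_eq: "i \<le> j \<Longrightarrow> seg c p i j = list_encode (map (\<lambda>t. eltr (ed c (lnth p t))) [i..<j])"
  unfolding seg_def using seg_eq_gen[of "j - i" j "\<lambda>t. eltr (ed c (lnth p t))"] by simp

definition gp :: "('g, 'b) monoid_scheme \<Rightarrow> 'g list \<Rightarrow> nat \<Rightarrow> nat \<Rightarrow> nat list \<Rightarrow> bool" where
  "gp G gens c N q \<longleftrightarrow> length q = N \<and> (\<forall>t<N. q ! t < nE c) \<and>
     (\<forall>t. Suc t < N \<longrightarrow> etgt (ed c (q ! t)) = esrc (ed c (q ! Suc t))) \<and>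
     (\<forall>i j. i < j \<and> j \<le> N \<longrightarrow> word_val G gens (map (\<lambda>t. eltr (ed c (q ! t))) [i..<j]) \<noteq> \<one>\<^bsub>G\<^esub>)"

lemma Pc_iff:
  assumes W: "Wc (wpi G gens) (length gens) c"
  shows "Pc (wpi G gens) c N \<longleftrightarrow> (\<exists>q. gp G gens c N q)"
proof
  have W2: "\<forall>x<nE c. eltr (ed c x) < 2 * length gens"
    using W unfolding Wc_def by blast
  have lok: "letter_ok gens (eltr (ed c x))" if "x < nE c" for x
    using W2 that unfolding letter_ok_def by blast
  {
    assume "Pc (wpi G gens) c N"
    then obtain p where p: "\<forall>i<N. (ltl ^^ i) p \<noteq> 0 \<and> lnth p i < nE c \<and>
     (Suc i < N \<longrightarrow> etgt (ed c (lnth p i)) = esrc (ed c (lnth p (Suc i)))) \<and>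
     (\<forall>j<Suc N. i < j \<longrightarrow> wpi G gens (seg c p i j) = 0)"
      unfolding Pc_def by blast
    have len: "N \<le> length (list_decode p)"
    proof (cases N)
      case (Suc M)
      then have "(ltl ^^ M) p \<noteq> 0" using p by auto
      then show ?thesis using ltli_zero_iff[of M p] Suc by simp
    qed simp
    define q where "q = take N (list_decode p)"
    have qn: "q ! t = lnth p t" if "t < N" for t
      using that len lnth_eq[of t p] by (simp add: q_def)
    have "gp G gens c N q"
      unfolding gp_def
    proof (intro conjI allI impI)
      show "length q = N" using len by (simp add: q_def)
      show "q ! t < nE c" if "t < N" for t using p that qn by auto
      show "etgt (ed c (q ! t)) = esrc (ed c (q ! Suc t))" if "Suc t < N" for t
        using p that qn by auto
      fix i j assume ij: "i < j \<and> j \<le> N"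
      have m: "map (\<lambda>t. eltr (ed c (q ! t))) [i..<j] = map (\<lambda>t. eltr (ed c (lnth p t))) [i..<j]"
        using ij qn by (intro map_cong) auto
      have ok: "\<forall>l\<in>set (map (\<lambda>t. eltr (ed c (q ! t))) [i..<j]). letter_ok gens l"
        using ij qn p lok by auto
      have "wpi G gens (seg c p i j) = 0" using p ij by auto
      then have "wpi G gens (list_encode (map (\<lambda>t. eltr (ed c (q ! t))) [i..<j])) = 0"
        using seg_eq[of i j c p] ij by (simp only: m) simp
      then show "word_val G gens (map (\<lambda>t. eltr (ed c (q ! t))) [i..<j]) \<noteq> \<one>\<^bsub>G\<^esub>"
        using wpi_list[OF ok, of G] by (simp split: if_splits)
    qed
    then show "\<exists>q. gp G gens c N q" by blast
  }
  {
    assume "\<exists>q. gp G gens c N q"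
    then obtain q where q: "gp G gens c N q" by blast
    define p where "p = list_encode q"
    have ld: "list_decode p = q" by (simp add: p_def)
    have qN: "length q = N" using q by (simp add: gp_def)
    have "\<forall>x\<in>set q. x \<le> nE c" using q qN by (auto simp: gp_def in_set_conv_nth less_imp_le)
    then have "p \<le> list_encode (replicate N (nE c))"
      unfolding p_def using list_encode_le_rep[of q "nE c"] qN by simp
    then have pb: "p < Suc (list_encode (replicate N (nE c)))" by simp
    have ln: "lnth p t = q ! t" if "t < N" for t using lnth_eq[of t p] ld qN that by simp
    have "\<forall>i<N. (ltl ^^ i) p \<noteq> 0 \<and> lnth p i < nE c \<and>
     (Suc i < N \<longrightarrow> etgt (ed c (lnth p i)) = esrc (ed c (lnth p (Suc i)))) \<and>
     (\<forall>j<Suc N. i < j \<longrightarrow> wpi G gens (seg c p i j) = 0)"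
    proof (intro allI impI conjI)
      fix i assume i: "i < N"
      show "(ltl ^^ i) p \<noteq> 0" using ltli_zero_iff[of i p] ld qN i by simp
      show "lnth p i < nE c" using q i ln by (simp add: gp_def)
      show "etgt (ed c (lnth p i)) = esrc (ed c (lnth p (Suc i)))" if "Suc i < N"
        using q that ln by (simp add: gp_def)
      fix j assume j: "j < Suc N" "i < j"
      have m: "map (\<lambda>t. eltr (ed c (q ! t))) [i..<j] = map (\<lambda>t. eltr (ed c (lnth p t))) [i..<j]"
        using j ln by (intro map_cong) auto
      have ok: "\<forall>l\<in>set (map (\<lambda>t. eltr (ed c (q ! t))) [i..<j]). letter_ok gens l"
        using j q lok by (auto simp: gp_def)
      have "word_val G gens (map (\<lambda>t. eltr (ed c (q ! t))) [i..<j]) \<noteq> \<one>\<^bsub>G\<^esub>"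
        using q j by (auto simp: gp_def)
      then have "wpi G gens (list_encode (map (\<lambda>t. eltr (ed c (q ! t))) [i..<j])) = 0"
        using wpi_list[OF ok, of G] by simp
      then show "wpi G gens (seg c p i j) = 0"
        using seg_eq[of i j c p] j by (simp only: m)
    qed
    then show "Pc (wpi G gens) c N" unfolding Pc_def using pb by blast
  }
qed

lemma Wc_iff:
  assumes grp: "group G" and gc: "set gens \<subseteq> carrier G"
  shows "Wc (wpi G gens) (length gens) c \<longleftrightarrow>
    (list_decode c \<noteq> [] \<and> (\<forall>(a, a', l) \<in> set (code_edges c). letter_ok gens l) \<and>
     is_tileset_graph G (set gens) (code_vertices c) (code_graph_edges G gens c))"
    (is "?L \<longleftrightarrow> ?R")
proof
  interpret group G by (rule grp)
  let ?s = "\<lambda>x. esrc (ed c x)" and ?t = "\<lambda>x. etgt (ed c x)" and ?l = "\<lambda>x. eltr (ed c x)"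
  let ?lv = "letter_val G gens"
  {
    assume L: ?L
    then have ne: "list_decode c \<noteq> []" unfolding Wc_def by auto
    note st = struct_lemmas[OF ne]
    have W: "\<And>x. x < nE c \<Longrightarrow> ?l x < 2 * length gens \<and> ?s x < nV c \<and> ?t x < nV c \<and>
       (\<exists>y<nE c. ?s y = ?t x \<and> ?t y = ?s x \<and> wpi G gens (code2 (?l y) (?l x)) = 1)"
      using L unfolding Wc_def by blast
    have lok: "letter_ok gens (?l x)" if "x < nE c" for x
      using W[OF that] by (simp add: letter_ok_def)
    have lets: "\<forall>(a, a', l) \<in> set (code_edges c). letter_ok gens l"
      using lok by (auto simp: st(3))
    have ts: "is_tileset_graph G (set gens) (code_vertices c) (code_graph_edges G gens c)"
      unfolding is_tileset_graph_def
    proof (intro conjI)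
      show "finite (code_vertices c)" by (simp add: st(2))
      show "finite (code_graph_edges G gens c)" by (simp add: st(4))
      show "\<forall>(a, a', s)\<in>code_graph_edges G gens c. a \<in> code_vertices c \<and> a' \<in> code_vertices c \<and>
         s \<in> set gens \<union> (\<lambda>x. inv\<^bsub>G\<^esub> x) ` set gens"
        using W lok letter_val_S by (auto simp: st(2,4))
      have sy: "(?t x, ?s x, inv\<^bsub>G\<^esub> (?lv (?l x))) \<in> code_graph_edges G gens c" if x: "x < nE c" for x
      proof -
        obtain y where y: "y < nE c" "?s y = ?t x" "?t y = ?s x" "wpi G gens (code2 (?l y) (?l x)) = 1"
          using W[OF x] by blast
        have ok: "\<forall>l\<in>set [?l y, ?l x]. letter_ok gens l" using lok x y(1) by simp
        have "word_val G gens [?l y, ?l x] = \<one>\<^bsub>G\<^esub>"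
          using y(4) wpi_list[OF ok, of G] by (simp add: code2_def split: if_splits)
        then have "?lv (?l y) \<otimes>\<^bsub>G\<^esub> ?lv (?l x) = \<one>\<^bsub>G\<^esub>"
          using letter_val_carrier[OF gc] lok x by (simp add: word_val_def)
        then have "inv\<^bsub>G\<^esub> (?lv (?l x)) = ?lv (?l y)"
          using letter_val_carrier[OF gc] lok x y(1) by (simp add: inv_equality)
        then have "(?t x, ?s x, inv\<^bsub>G\<^esub> (?lv (?l x))) = (?s y, ?t y, ?lv (?l y))"
          using y by simp
        then show ?thesis unfolding st(4) using y(1) by (intro image_eqI) auto
      qed
      show "\<forall>(a, a', s)\<in>code_graph_edges G gens c. (a', a, inv\<^bsub>G\<^esub> s) \<in> code_graph_edges G gens c"
        using sy by (auto simp: st(4))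
    qed
    show ?R using ne lets ts by blast
  }
  {
    assume R: ?R
    then have ne: "list_decode c \<noteq> []" by blast
    note st = struct_lemmas[OF ne]
    have lok: "letter_ok gens (?l x)" if "x < nE c" for x
      using R that by (auto simp: st(3))
    have ts: "is_tileset_graph G (set gens) (code_vertices c) (code_graph_edges G gens c)" using R by blast
    have A: "?s x < nV c \<and> ?t x < nV c" if "x < nE c" for x
      using ts that unfolding is_tileset_graph_def by (auto simp: st(2,4))
    have sym: "\<exists>y<nE c. ?s y = ?t x \<and> ?t y = ?s x \<and> ?lv (?l y) = inv\<^bsub>G\<^esub> (?lv (?l x))" if "x < nE c" for x
    proof -
      have "(?t x, ?s x, inv\<^bsub>G\<^esub> (?lv (?l x))) \<in> code_graph_edges G gens c"
        using ts that unfolding is_tileset_graph_def by (auto simp: st(4))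
      then show ?thesis by (auto simp: st(4))
    qed
    have "\<forall>x<nE c. ?l x < 2 * length gens \<and> ?s x < nV c \<and> ?t x < nV c \<and>
       (\<exists>y<nE c. ?s y = ?t x \<and> ?t y = ?s x \<and> wpi G gens (code2 (?l y) (?l x)) = 1)"
    proof (intro allI impI conjI)
      fix x assume x: "x < nE c"
      show "?l x < 2 * length gens" using lok[OF x] by (simp add: letter_ok_def)
      show "?s x < nV c" "?t x < nV c" using A[OF x] by auto
      obtain y where y: "y < nE c" "?s y = ?t x" "?t y = ?s x" "?lv (?l y) = inv\<^bsub>G\<^esub> (?lv (?l x))"
        using sym[OF x] by blast
      have ok: "\<forall>l\<in>set [?l y, ?l x]. letter_ok gens l" using lok x y(1) by simp
      have "word_val G gens [?l y, ?l x] = \<one>\<^bsub>G\<^esub>"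
        using y(4) letter_val_carrier[OF gc] lok x by (simp add: word_val_def)
      then have "wpi G gens (code2 (?l y) (?l x)) = 1"
        using wpi_list[OF ok, of G] by (simp add: code2_def)
      then show "\<exists>y<nE c. ?s y = ?t x \<and> ?t y = ?s x \<and> wpi G gens (code2 (?l y) (?l x)) = 1"
        using y by blast
    qed
    then show ?L unfolding Wc_def using ne by simp
  }
qed

primrec posp :: "('g, 'b) monoid_scheme \<Rightarrow> (int \<Rightarrow> 'g) \<Rightarrow> nat \<Rightarrow> 'g" where
  "posp G d 0 = \<one>\<^bsub>G\<^esub>"
| "posp G d (Suc k) = posp G d k \<otimes>\<^bsub>G\<^esub> d (int k)"

primrec negp :: "('g, 'b) monoid_scheme \<Rightarrow> (int \<Rightarrow> 'g) \<Rightarrow> nat \<Rightarrow> 'g" where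
  "negp G d 0 = \<one>\<^bsub>G\<^esub>"
| "negp G d (Suc k) = d (- int k - 1) \<otimes>\<^bsub>G\<^esub> negp G d k"

definition omg :: "('g, 'b) monoid_scheme \<Rightarrow> (int \<Rightarrow> 'g) \<Rightarrow> int \<Rightarrow> 'g" where
  "omg G d x = (if 0 \<le> x then posp G d (nat x) else inv\<^bsub>G\<^esub> (negp G d (nat (- x))))"

context group
begin

lemma posp_carrier: "(\<And>x. d x \<in> carrier G) \<Longrightarrow> posp G d k \<in> carrier G"
  by (induction k) auto

lemma negp_carrier: "(\<And>x. d x \<in> carrier G) \<Longrightarrow> negp G d k \<in> carrier G"
  by (induction k) auto

lemma omg_carrier: "(\<And>x. d x \<in> carrier G) \<Longrightarrow> omg G d x \<in> carrier G"
  by (auto simp: omg_def posp_carrier negp_carrier)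

lemma omg_neg: "omg G d (- int k) = inv (negp G d k)"
  by (cases "k = 0") (simp_all add: omg_def)

lemma omg_step:
  assumes d: "\<And>x. d x \<in> carrier G"
  shows "inv (omg G d x) \<otimes> omg G d (x + 1) = d x"
proof (cases "0 \<le> x")
  case True
  then obtain m where hm: "x = int m" by (metis nonneg_int_cases)
  have "omg G d (x + 1) = posp G d m \<otimes> d x"
    using hm by (simp add: omg_def nat_add_distrib flip: Suc_eq_plus1)
  then show ?thesis using hm d posp_carrier[of d m, OF d]
    by (simp add: omg_def m_assoc[symmetric])
next
  case False
  define k where "k = nat (- x - 1)"
  have k: "x = - int (Suc k)" using False by (simp add: k_def)
  have xk: "x + 1 = - int k" using k by simp
  have x1: "omg G d (x + 1) = inv (negp G d k)"
    unfolding xk by (rule omg_neg)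
  have "- int k - 1 = x" using k by simp
  then have dx: "d (- int k - 1) = d x" by simp
  have "omg G d x = inv (negp G d (Suc k))"
    unfolding k by (rule omg_neg)
  then have "omg G d x = inv (d x \<otimes> negp G d k)"
    by (simp only: negp.simps dx)
  then have "inv (omg G d x) \<otimes> omg G d (x + 1) = (d x \<otimes> negp G d k) \<otimes> inv (negp G d k)"
    using x1 d negp_carrier[of d k, OF d] by simp
  also have "\<dots> = d x" using d negp_carrier[of d k, OF d] by (simp add: m_assoc)
  finally show ?thesis .
qed

end

lemma inv_mult_one_eq:
  assumes "group G" "a \<in> carrier G" "b \<in> carrier G" "inv\<^bsub>G\<^esub> a \<otimes>\<^bsub>G\<^esub> b = \<one>\<^bsub>G\<^esub>"
  shows "a = b"
proof -
  interpret group G by fact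
  have "inv\<^bsub>G\<^esub> b = inv\<^bsub>G\<^esub> a" using inv_equality[OF assms(4) assms(3)] assms(2) by simp
  then show ?thesis using assms(2,3) by (metis inv_inv)
qed

lemma snake_iff:
  assumes grp: "group G" and gc: "set gens \<subseteq> carrier G"
    and W: "Wc (wpi G gens) (length gens) c"
  shows "(\<exists>\<omega> \<zeta>. bi_infinite_snake G (set gens) (code_vertices c) (code_graph_edges G gens c) \<omega> \<zeta>)
     \<longleftrightarrow> (\<forall>N. \<exists>q. gp G gens c N q)"
proof -
  interpret group G by (rule grp)
  have ne: "list_decode c \<noteq> []" using W unfolding Wc_def by auto
  note st = struct_lemmas[OF ne]
  have W': "\<forall>x<nE c. eltr (ed c x) < 2 * length gens \<and> esrc (ed c x) < nV c \<and> etgt (ed c x) < nV c"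
    using W unfolding Wc_def by blast
  have lok: "letter_ok gens (eltr (ed c x))" if "x < nE c" for x
    using W' that by (simp add: letter_ok_def)
  have lvc: "letter_val G gens (eltr (ed c x)) \<in> carrier G" if "x < nE c" for x
    using letter_val_carrier[OF gc lok[OF that]] .
  show ?thesis
  proof
    assume "\<exists>\<omega> \<zeta>. bi_infinite_snake G (set gens) (code_vertices c) (code_graph_edges G gens c) \<omega> \<zeta>"
    then obtain \<omega> \<zeta> where sn: "bi_infinite_snake G (set gens) (code_vertices c) (code_graph_edges G gens c) \<omega> \<zeta>"
      by blast
    have inj: "inj \<omega>" and oc: "\<And>i. \<omega> i \<in> carrier G"
      and inB: "\<And>i. (\<zeta> i, \<zeta> (i + 1), inv\<^bsub>G\<^esub> (\<omega> i) \<otimes>\<^bsub>G\<^esub> \<omega> (i + 1)) \<in> code_graph_edges G gens c"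
      using sn unfolding bi_infinite_snake_def by auto
    have "\<forall>i. \<exists>x. x < nE c \<and> esrc (ed c x) = \<zeta> i \<and> etgt (ed c x) = \<zeta> (i + 1) \<and>
        letter_val G gens (eltr (ed c x)) = inv\<^bsub>G\<^esub> (\<omega> i) \<otimes>\<^bsub>G\<^esub> \<omega> (i + 1)"
    proof
      fix i
      from inB[of i] obtain x where x: "x \<in> {..<nE c}"
        "(\<zeta> i, \<zeta> (i + 1), inv\<^bsub>G\<^esub> (\<omega> i) \<otimes>\<^bsub>G\<^esub> \<omega> (i + 1)) = (esrc (ed c x), etgt (ed c x), letter_val G gens (eltr (ed c x)))"
        unfolding st(4) by (rule imageE)
      show "\<exists>x. x < nE c \<and> esrc (ed c x) = \<zeta> i \<and> etgt (ed c x) = \<zeta> (i + 1) \<and>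
        letter_val G gens (eltr (ed c x)) = inv\<^bsub>G\<^esub> (\<omega> i) \<otimes>\<^bsub>G\<^esub> \<omega> (i + 1)"
        using x by (intro exI[of _ x]) simp
    qed
    from choice[OF this] obtain e where e0: "\<forall>i. e i < nE c \<and> esrc (ed c (e i)) = \<zeta> i \<and> etgt (ed c (e i)) = \<zeta> (i + 1) \<and>
        letter_val G gens (eltr (ed c (e i))) = inv\<^bsub>G\<^esub> (\<omega> i) \<otimes>\<^bsub>G\<^esub> \<omega> (i + 1)"
      by blast
    note e = spec[OF e0]
    show "\<forall>N. \<exists>q. gp G gens c N q"
    proof
      fix N
      define q where "q = map (\<lambda>t. e (int t)) [0..<N]"
      have qt: "q ! t = e (int t)" if "t < N" for t using that by (simp add: q_def)
      have "gp G gens c N q"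
        unfolding gp_def
      proof (intro conjI allI impI)
        show "length q = N" by (simp add: q_def)
        show "q ! t < nE c" if "t < N" for t using qt[OF that] e by simp
        show "etgt (ed c (q ! t)) = esrc (ed c (q ! Suc t))" if "Suc t < N" for t
        proof -
          have "int (Suc t) = int t + 1" by simp
          then show ?thesis using qt[of t] qt[of "Suc t"] that e[of "int t"] e[of "int (Suc t)"] by (simp add: add.commute)
        qed
        fix i j assume ij: "i < j \<and> j \<le> N"
        define L where "L t = eltr (ed c (e (int t)))" for t
        have ij': "i + (j - i) = j" using ij by simp
        have m: "map (\<lambda>t. eltr (ed c (q ! t))) [i..<j] = map L [i..<i + (j - i)]"
          unfolding ij' by (rule map_cong[OF refl]) (use ij qt in \<open>simp add: L_def\<close>)
        have tel: "word_val G gens (map L [i..<i + (j - i)]) = inv\<^bsub>G\<^esub> (\<omega> (int i)) \<otimes>\<^bsub>G\<^esub> \<omega> (int (i + (j - i)))"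
        proof (rule telescope[OF gc])
          show "\<And>t. \<omega> (int t) \<in> carrier G" using oc by simp
          show "\<And>t. letter_ok gens (L t)" using lok e by (simp add: L_def)
          fix t
          have "int (Suc t) = int t + 1" by simp
          then show "letter_val G gens (L t) = inv\<^bsub>G\<^esub> (\<omega> (int t)) \<otimes>\<^bsub>G\<^esub> \<omega> (int (Suc t))"
            using e[of "int t"] by (simp add: L_def add.commute)
        qed
        show "word_val G gens (map (\<lambda>t. eltr (ed c (q ! t))) [i..<j]) \<noteq> \<one>\<^bsub>G\<^esub>"
        proof
          assume "word_val G gens (map (\<lambda>t. eltr (ed c (q ! t))) [i..<j]) = \<one>\<^bsub>G\<^esub>"
          then have "inv\<^bsub>G\<^esub> (\<omega> (int i)) \<otimes>\<^bsub>G\<^esub> \<omega> (int j) = \<one>\<^bsub>G\<^esub>" using m tel ij by simp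
          then have "\<omega> (int i) = \<omega> (int j)" using inv_mult_one_eq[OF grp oc oc] by blast
          then have "int i = int j" using inj by (rule injD[rotated])
          then show False using ij by simp
        qed
      qed
      then show "\<exists>q. gp G gens c N q" by blast
    qed
  next
    assume "\<forall>N. \<exists>q. gp G gens c N q"
    from choice[OF this] obtain Q where Q0: "\<forall>N. gp G gens c N (Q N)" by blast
    note Q = spec[OF Q0]
    have Qlen: "length (Q N) = N" for N using Q[of N] by (simp add: gp_def)
    have Qlt: "t < N \<Longrightarrow> Q N ! t < nE c" for t N using Q[of N] by (simp add: gp_def)
    have Qcomp: "Suc t < N \<Longrightarrow> etgt (ed c (Q N ! t)) = esrc (ed c (Q N ! Suc t))" for t N
      using Q[of N] by (simp add: gp_def)
    have Qw: "i < j \<Longrightarrow> j \<le> N \<Longrightarrow> word_val G gens (map (\<lambda>t. eltr (ed c (Q N ! t))) [i..<j]) \<noteq> \<one>\<^bsub>G\<^esub>" for i j N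
      using Q[of N] by (simp add: gp_def)
    define f where "f N x = (if - int N \<le> x \<and> x < int N then Q (2 * N) ! nat (x + int N) else 0)" for N x
    have bd: "f N x \<le> nE c" for N x
    proof (cases "- int N \<le> x \<and> x < int N")
      case True
      then have "nat (x + int N) < 2 * N" by linarith
      then show ?thesis using True Qlt[of "nat (x + int N)" "2 * N"] by (simp add: f_def)
    next
      case False then show ?thesis by (simp only: f_def if_False)
    qed
    have "\<exists>g. \<forall>F r. finite F \<longrightarrow> (\<exists>N\<ge>r. \<forall>x\<in>F. g x = f N x)"
      by (rule compactness[of f "nE c"]) (rule bd)
    then obtain g where g0: "\<forall>F r. finite F \<longrightarrow> (\<exists>N\<ge>r. \<forall>x\<in>F. g x = f N x)" ..
    have g: "\<exists>N\<ge>r. \<forall>x\<in>F. g x = f N x" if "finite F" for F r using g0 that by blast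
    have win: "\<exists>N. (\<forall>t<m. g (i + int t) = Q (2 * N) ! (nat (i + int N) + t)) \<and> nat (i + int N) + m \<le> 2 * N"
      for i m
    proof -
      obtain N where N: "N \<ge> nat \<bar>i\<bar> + m + 1" "\<forall>x\<in>(\<lambda>t. i + int t) ` {..<m}. g x = f N x"
        using g[of "(\<lambda>t. i + int t) ` {..<m}" "nat \<bar>i\<bar> + m + 1"] by blast
      have "g (i + int t) = Q (2 * N) ! (nat (i + int N) + t)" if t: "t < m" for t
      proof -
        have "g (i + int t) = f N (i + int t)" using N(2) t by auto
        also have "\<dots> = Q (2 * N) ! nat (i + int t + int N)"
        proof -
          have "- int N \<le> i + int t \<and> i + int t < int N" using N(1) t by linarith
          then show ?thesis by (simp only: f_def if_True simp_thms)
        qed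
        also have "nat (i + int t + int N) = nat (i + int N) + t" using N(1) by linarith
        finally show ?thesis .
      qed
      moreover have "nat (i + int N) + m \<le> 2 * N" using N(1) by linarith
      ultimately show ?thesis by blast
    qed
    have P1: "g x < nE c \<and> etgt (ed c (g x)) = esrc (ed c (g (x + 1)))" for x
    proof -
      obtain N where N: "\<forall>t<2. g (x + int t) = Q (2 * N) ! (nat (x + int N) + t)" "nat (x + int N) + 2 \<le> 2 * N"
        using win[of 2 x] by blast
      have g0: "g x = Q (2 * N) ! nat (x + int N)" using N(1)[rule_format, of 0] by simp
      have g1: "g (x + 1) = Q (2 * N) ! Suc (nat (x + int N))" using N(1)[rule_format, of 1] by simp
      have "Suc (nat (x + int N)) < 2 * N" using N(2) by linarith
      then show ?thesis using g0 g1 Qlt[of "nat (x + int N)" "2 * N"] Qcomp[of "nat (x + int N)" "2 * N"] by simp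
    qed
    have P2: "word_val G gens (map (\<lambda>t. eltr (ed c (g (i + int t)))) [0..<m]) \<noteq> \<one>\<^bsub>G\<^esub>" if m: "0 < m" for i m
    proof -
      obtain N where N: "\<forall>t<m. g (i + int t) = Q (2 * N) ! (nat (i + int N) + t)" "nat (i + int N) + m \<le> 2 * N"
        using win[of m i] by blast
      define a where "a = nat (i + int N)"
      have "map (\<lambda>t. eltr (ed c (g (i + int t)))) [0..<m] = map (\<lambda>t. eltr (ed c (Q (2 * N) ! (a + t)))) [0..<m]"
        by (rule map_cong[OF refl]) (use N(1) in \<open>simp add: a_def\<close>)
      also have "\<dots> = map (\<lambda>t. eltr (ed c (Q (2 * N) ! t))) (map (\<lambda>t. t + a) [0..<m])"
        by (simp add: add.commute)
      also have "\<dots> = map (\<lambda>t. eltr (ed c (Q (2 * N) ! t))) [a..<m + a]"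
        by (simp only: map_add_upt)
      finally show ?thesis using Qw[of a "m + a" "2 * N"] m N(2) by (simp add: a_def add.commute)
    qed
    define dd where "dd x = letter_val G gens (eltr (ed c (g x)))" for x
    have ddc: "dd x \<in> carrier G" for x using lvc P1 by (simp add: dd_def)
    define \<omega> where "\<omega> = omg G dd"
    define \<zeta> where "\<zeta> x = esrc (ed c (g x))" for x
    have oc: "\<omega> x \<in> carrier G" for x unfolding \<omega>_def using omg_carrier[OF ddc] .
    have ostep: "inv\<^bsub>G\<^esub> (\<omega> x) \<otimes>\<^bsub>G\<^esub> \<omega> (x + 1) = dd x" for x unfolding \<omega>_def using omg_step[OF ddc] .
    have tel: "word_val G gens (map (\<lambda>t. eltr (ed c (g (i + int t)))) [0..<0 + m]) = inv\<^bsub>G\<^esub> (\<omega> (i + int 0)) \<otimes>\<^bsub>G\<^esub> \<omega> (i + int (0 + m))" for i m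
    proof (rule telescope[OF gc, where \<Omega>="\<lambda>t. \<omega> (i + int t)"])
      show "\<And>t. \<omega> (i + int t) \<in> carrier G" using oc by simp
      show "\<And>t. letter_ok gens (eltr (ed c (g (i + int t))))" using lok P1 by simp
      fix t
      have eq: "\<omega> (i + int (Suc t)) = \<omega> ((i + int t) + 1)" by (simp add: algebra_simps)
      show "letter_val G gens (eltr (ed c (g (i + int t)))) = inv\<^bsub>G\<^esub> (\<omega> (i + int t)) \<otimes>\<^bsub>G\<^esub> \<omega> (i + int (Suc t))"
        by (simp only: eq ostep dd_def)
    qed
    have lt_ne: "\<omega> x \<noteq> \<omega> y" if xy: "x < y" for x y
    proof
      assume eq: "\<omega> x = \<omega> y"
      define m where "m = nat (y - x)"
      have m: "0 < m" "y = x + int m" using xy by (auto simp: m_def)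
      have "word_val G gens (map (\<lambda>t. eltr (ed c (g (x + int t)))) [0..<m]) = \<one>\<^bsub>G\<^esub>"
        using tel[of x m] m eq oc[of y] by simp
      then show False using P2[OF m(1)] by blast
    qed
    have "inj \<omega>"
    proof (rule injI)
      fix x y assume "\<omega> x = \<omega> y"
      then show "x = y" using lt_ne[of x y] lt_ne[of y x] by (cases x y rule: linorder_cases) auto
    qed
    have "bi_infinite_snake G (set gens) (code_vertices c) (code_graph_edges G gens c) \<omega> \<zeta>"
      unfolding bi_infinite_snake_def
    proof (intro conjI allI)
      show "inj \<omega>" by fact
      show "\<omega> i \<in> carrier G" for i by (rule oc)
      show "\<zeta> i \<in> code_vertices c" for i using W' P1 by (simp add: st(2) \<zeta>_def)
      show "inv\<^bsub>G\<^esub> (\<omega> i) \<otimes>\<^bsub>G\<^esub> \<omega> (i + 1) \<in> set gens \<union> (\<lambda>x. inv\<^bsub>G\<^esub> x) ` set gens" for i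
        using ostep[of i] letter_val_S[OF lok] P1 by (simp add: dd_def)
      show "(\<zeta> i, \<zeta> (i + 1), inv\<^bsub>G\<^esub> (\<omega> i) \<otimes>\<^bsub>G\<^esub> \<omega> (i + 1)) \<in> code_graph_edges G gens c" for i
      proof -
        have "(\<zeta> i, \<zeta> (i + 1), inv\<^bsub>G\<^esub> (\<omega> i) \<otimes>\<^bsub>G\<^esub> \<omega> (i + 1)) =
          (esrc (ed c (g i)), etgt (ed c (g i)), letter_val G gens (eltr (ed c (g i))))"
          using ostep[of i] P1[of i] by (simp add: \<zeta>_def dd_def)
        then show ?thesis unfolding st(4) using P1[of i] by (intro image_eqI) auto
      qed
    qed
    then show "\<exists>\<omega> \<zeta>. bi_infinite_snake G (set gens) (code_vertices c) (code_graph_edges G gens c) \<omega> \<zeta>"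
      by blast
  qed
qed

theorem corollary1:
  fixes G :: "('g, 'b) monoid_scheme" and S :: "'g set" and gens :: "'g list"
  assumes "group G"
    and "finite S" and "S \<subseteq> carrier G" and "generate G S = carrier G"
    and "set gens = S"
    and "decidable_set (word_problem G gens)"
  shows "Pi01 (snake_problem G gens)"
proof -
  have grp: "group G" by fact
  have gc: "set gens \<subseteq> carrier G" using assms(3,5) by simp
  obtain f0 where f0: "\<And>n. reval f0 [n] (if n \<in> word_problem G gens then 1 else 0)"
    using assms(6) unfolding decidable_set_def by blast
  define w where "w = wpi G gens"
  have wf: "\<And>m. reval f0 [m] (w m)" using f0 by (simp add: w_def wpi_def)
  obtain e where e: "\<And>\<rho>. ev w e \<rho> = (if Wc w (length gens) (\<rho> 0) \<and> Pc w (\<rho> 0) (\<rho> 1) then 1 else 0)"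
    using cp_D[of w "length gens"] unfolding cp_def cmpt_def by blast
  define R where "R = {(n, m). Wc w (length gens) n \<and> Pc w n m}"
  have dec: "decidable_rel R"
    unfolding decidable_rel_def
  proof (intro exI allI)
    fix n m
    have "reval (cmp f0 e 2) [n, m] (ev w e (envl [n, m]))"
      by (rule cmp_correct[OF wf]) simp
    moreover have "envl [n, m] 0 = n" "envl [n, m] 1 = m" by (simp_all add: envl_def)
    ultimately show "reval (cmp f0 e 2) [n, m] (if (n, m) \<in> R then 1 else 0)"
      using e[of "envl [n, m]"] by (simp add: R_def)
  qed
  have mem: "n \<in> snake_problem G gens \<longleftrightarrow> (\<forall>m. (n, m) \<in> R)" for n
  proof (cases "Wc w (length gens) n")
    case True
    have "n \<in> snake_problem G gens \<longleftrightarrow>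
      (\<exists>\<omega> \<zeta>. bi_infinite_snake G (set gens) (code_vertices n) (code_graph_edges G gens n) \<omega> \<zeta>)"
      using Wc_iff[OF grp gc, of n] True unfolding snake_problem_def w_def by auto
    also have "\<dots> \<longleftrightarrow> (\<forall>N. \<exists>q. gp G gens n N q)"
      using snake_iff[OF grp gc] True unfolding w_def by blast
    also have "\<dots> \<longleftrightarrow> (\<forall>m. (n, m) \<in> R)"
      using Pc_iff[of G gens n] True unfolding R_def w_def by auto
    finally show ?thesis .
  next
    case False
    then have "n \<notin> snake_problem G gens"
      using Wc_iff[OF grp gc, of n] unfolding snake_problem_def w_def by auto
    then show ?thesis using False by (auto simp: R_def)
  qed
  show ?thesis unfolding Pi01_def using dec mem by blast
qed


end
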